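(* Let $\mathcal{X}$ be a Hilbert module over a pro-$C^*$-algebra $\mathcal{A}$, let $K\in Hom^*_{\mathcal{A}}(\mathcal{X})$, let $\{\xi_i\}_{i\in I}$ be a $K$-frame for $\mathcal{X}$, and let $T\in Hom^*_{\mathcal{A}}(\mathcal{X})$ be uniformly bounded and a co-isometry (i.e. $TT^*=I$) with $TK=KT$. Then $\{T\xi_i\}_{i\in I}$ is a $K$-frame for $\mathcal{X}$.
   Context: A pro-$C^*$-algebra $\mathcal{A}$ is a complete Hausdorff topological $*$-algebra whose topology is given by its continuous $C^*$-seminorms $S(\mathcal{A})$. A Hilbert $\mathcal{A}$-module $\mathcal{X}$ is a left $\mathcal{A}$-module with an $\mathcal{A}$-valued inner product, complete for $\bar p_{\mathcal{X}}(\xi)=\sqrt{p(\langle\xi,\xi\rangle)}$. $Hom^*_{\mathcal{A}}(\mathcal{X})$ denotes adjointable bounded $\mathcal{A}$-module maps; $T$ is uniformly bounded if there is a single $C>0$ with $\bar p_{\mathcal{X}}(T\xi)\le C\bar p_{\mathcal{X}}(\xi)$ for all $p,\xi$. A sequence $\{\xi_i\}_{i\in I}$ ($I$ countable) is a $K$-frame for $\mathcal{X}$ if $\sum_i\langle\xi,\xi_i\rangle\langle\xi_i,\xi\rangle$ converges in $\mathcal{A}$ and there are $A,B>0$ with $A\langle K^*\xi,K^*\xi\rangle\le\sum_i\langle\xi,\xi_i\rangle\langle\xi_i,\xi\rangle\le B\langle\xi,\xi\rangle$ for all $\xi\in\mathcal{X}$. *)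

theory Defs
  imports "HOL-Analysis.Analysis"
begin

text \<open>A pro-C*-algebra is modelled on a type 'a of class ring (not necessarily unital),
together with a complex scalar multiplication, an involution and the family S(A)
of all continuous C*-seminorms, which generates the topology.\<close>

record 'a proalg =
  scA   :: "complex \<Rightarrow> 'a \<Rightarrow> 'a"
  star  :: "'a \<Rightarrow> 'a"
  semis :: "('a \<Rightarrow> real) set"

definition star_algebra :: "('a::ring, 'b) proalg_scheme \<Rightarrow> bool" where
  "star_algebra A \<longleftrightarrow>
     (\<forall>x. scA A 1 x = x) \<and>
     (\<forall>a b x. scA A a (scA A b x) = scA A (a * b) x) \<and>
     (\<forall>a x y. scA A a (x + y) = scA A a x + scA A a y) \<and>
     (\<forall>a b x. scA A (a + b) x = scA A a x + scA A b x) \<and>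
     (\<forall>c x y. scA A c (x * y) = scA A c x * y \<and> scA A c (x * y) = x * scA A c y) \<and>
     (\<forall>x. star A (star A x) = x) \<and>
     (\<forall>x y. star A (x + y) = star A x + star A y) \<and>
     (\<forall>c x. star A (scA A c x) = scA A (cnj c) (star A x)) \<and>
     (\<forall>x y. star A (x * y) = star A y * star A x)"

definition cstar_seminorm :: "('a::ring, 'b) proalg_scheme \<Rightarrow> ('a \<Rightarrow> real) \<Rightarrow> bool" where
  "cstar_seminorm A p \<longleftrightarrow>
     (\<forall>x. 0 \<le> p x) \<and>
     (\<forall>x y. p (x + y) \<le> p x + p y) \<and>
     (\<forall>c x. p (scA A c x) = cmod c * p x) \<and>
     (\<forall>x y. p (x * y) \<le> p x * p y) \<and>
     (\<forall>x. p (star A x * x) = (p x)\<^sup>2)"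

text \<open>Cauchy filters (= Cauchy nets) and convergence w.r.t. a family of seminorms.\<close>

definition cauchy_fam :: "('v::ab_group_add \<Rightarrow> real) set \<Rightarrow> 'v filter \<Rightarrow> bool" where
  "cauchy_fam P F \<longleftrightarrow>
     (\<forall>p\<in>P. \<forall>e>0. \<forall>\<^sub>F (x, y) in F \<times>\<^sub>F F. p (x - y) < e)"

definition conv_fam :: "('v::ab_group_add \<Rightarrow> real) set \<Rightarrow> 'v filter \<Rightarrow> 'v \<Rightarrow> bool" where
  "conv_fam P F l \<longleftrightarrow> (\<forall>p\<in>P. \<forall>e>0. \<forall>\<^sub>F x in F. p (x - l) < e)"

definition complete_fam :: "('v::ab_group_add \<Rightarrow> real) set \<Rightarrow> bool" where
  "complete_fam P \<longleftrightarrow> (\<forall>F. F \<noteq> bot \<longrightarrow> cauchy_fam P F \<longrightarrow> (\<exists>l. conv_fam P F l))"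

definition has_sum_fam :: "('v::ab_group_add \<Rightarrow> real) set \<Rightarrow> ('i \<Rightarrow> 'v) \<Rightarrow> 'i set \<Rightarrow> 'v \<Rightarrow> bool" where
  "has_sum_fam P f I s \<longleftrightarrow> conv_fam P (filtermap (\<lambda>F. sum f F) (finite_subsets_at_top I)) s"

definition pro_cstar_algebra :: "('a::ring, 'b) proalg_scheme \<Rightarrow> bool" where
  "pro_cstar_algebra A \<longleftrightarrow>
     star_algebra A \<and>
     semis A \<noteq> {} \<and>
     (\<forall>p\<in>semis A. cstar_seminorm A p) \<and>
     (\<forall>p\<in>semis A. \<forall>q\<in>semis A. \<exists>r\<in>semis A. \<forall>x. p x \<le> r x \<and> q x \<le> r x) \<and>
     \<comment> \<open>S(A) consists of ALL continuous C*-seminorms for the topology it generates\<close>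
     (\<forall>q. cstar_seminorm A q \<and> (\<exists>p\<in>semis A. \<exists>C. \<forall>x. q x \<le> C * p x) \<longrightarrow> q \<in> semis A) \<and>
     \<comment> \<open>Hausdorff\<close>
     (\<forall>x. (\<forall>p\<in>semis A. p x = 0) \<longrightarrow> x = 0) \<and>
     \<comment> \<open>complete\<close>
     complete_fam (semis A)"

text \<open>Positivity and order: in a pro-C*-algebra the positive elements are exactly those of the
form b* b.\<close>

definition pos :: "('a::ring, 'b) proalg_scheme \<Rightarrow> 'a \<Rightarrow> bool" where
  "pos A a \<longleftrightarrow> (\<exists>b. a = star A b * b)"

definition le_A :: "('a::ring, 'b) proalg_scheme \<Rightarrow> 'a \<Rightarrow> 'a \<Rightarrow> bool" where
  "le_A A a b \<longleftrightarrow> pos A (b - a)"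

record ('a, 'x) hmod =
  act :: "'a \<Rightarrow> 'x \<Rightarrow> 'x"
  scX :: "complex \<Rightarrow> 'x \<Rightarrow> 'x"
  ip  :: "'x \<Rightarrow> 'x \<Rightarrow> 'a"

definition seminormX :: "('a::ring, 'b) proalg_scheme \<Rightarrow> ('a, 'x, 'c) hmod_scheme
      \<Rightarrow> ('a \<Rightarrow> real) \<Rightarrow> 'x \<Rightarrow> real" where
  "seminormX A M p \<xi> = sqrt (p (ip M \<xi> \<xi>))"

definition hilbert_module ::
    "('a::ring, 'b) proalg_scheme \<Rightarrow> ('a, 'x::ab_group_add, 'c) hmod_scheme \<Rightarrow> bool" where
  "hilbert_module A M \<longleftrightarrow>
     pro_cstar_algebra A \<and>
     \<comment> \<open>left A-module and complex vector space, compatibly\<close>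
     (\<forall>a x y. act M a (x + y) = act M a x + act M a y) \<and>
     (\<forall>a b x. act M (a + b) x = act M a x + act M b x) \<and>
     (\<forall>a b x. act M (a * b) x = act M a (act M b x)) \<and>
     (\<forall>x. scX M 1 x = x) \<and>
     (\<forall>a b x. scX M a (scX M b x) = scX M (a * b) x) \<and>
     (\<forall>a x y. scX M a (x + y) = scX M a x + scX M a y) \<and>
     (\<forall>a b x. scX M (a + b) x = scX M a x + scX M b x) \<and>
     (\<forall>c a x. scX M c (act M a x) = act M (scA A c a) x \<and> scX M c (act M a x) = act M a (scX M c x)) \<and>
     \<comment> \<open>A-valued inner product (linear in the first variable)\<close>
     (\<forall>x y z. ip M (x + y) z = ip M x z + ip M y z) \<and>
     (\<forall>a x y. ip M (act M a x) y = a * ip M x y) \<and>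
     (\<forall>c x y. ip M (scX M c x) y = scA A c (ip M x y)) \<and>
     (\<forall>x y. star A (ip M x y) = ip M y x) \<and>
     (\<forall>x. pos A (ip M x x)) \<and>
     (\<forall>x. ip M x x = 0 \<longrightarrow> x = 0) \<and>
     \<comment> \<open>complete w.r.t. the seminorms p-bar\<close>
     complete_fam ((\<lambda>p. seminormX A M p) ` semis A)"

definition is_adjoint :: "('a, 'x, 'c) hmod_scheme \<Rightarrow> ('x \<Rightarrow> 'x) \<Rightarrow> ('x \<Rightarrow> 'x) \<Rightarrow> bool" where
  "is_adjoint M T T' \<longleftrightarrow> (\<forall>x y. ip M (T x) y = ip M x (T' y))"

definition adj :: "('a, 'x, 'c) hmod_scheme \<Rightarrow> ('x \<Rightarrow> 'x) \<Rightarrow> ('x \<Rightarrow> 'x)" where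
  "adj M T = (SOME T'. is_adjoint M T T')"

definition homstar ::
    "('a::ring, 'b) proalg_scheme \<Rightarrow> ('a, 'x::ab_group_add, 'c) hmod_scheme \<Rightarrow> ('x \<Rightarrow> 'x) set" where
  "homstar A M = {T.
     (\<forall>x y. T (x + y) = T x + T y) \<and>
     (\<forall>a x. T (act M a x) = act M a (T x)) \<and>
     (\<forall>c x. T (scX M c x) = scX M c (T x)) \<and>
     (\<forall>p\<in>semis A. \<exists>C. \<forall>x. seminormX A M p (T x) \<le> C * seminormX A M p x) \<and>
     (\<exists>T'. is_adjoint M T T')}"

definition unif_bounded ::
    "('a::ring, 'b) proalg_scheme \<Rightarrow> ('a, 'x, 'c) hmod_scheme \<Rightarrow> ('x \<Rightarrow> 'x) \<Rightarrow> bool" where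
  "unif_bounded A M T \<longleftrightarrow>
     (\<exists>C>0. \<forall>p\<in>semis A. \<forall>x. seminormX A M p (T x) \<le> C * seminormX A M p x)"

definition kframe ::
    "('a::ring, 'b) proalg_scheme \<Rightarrow> ('a, 'x, 'c) hmod_scheme \<Rightarrow> ('x \<Rightarrow> 'x)
       \<Rightarrow> 'i set \<Rightarrow> ('i \<Rightarrow> 'x) \<Rightarrow> bool" where
  "kframe A M K I \<xi> \<longleftrightarrow>
     countable I \<and>
     (\<forall>x. \<exists>s. has_sum_fam (semis A) (\<lambda>i. ip M x (\<xi> i) * ip M (\<xi> i) x) I s) \<and>
     (\<exists>a b::real. a > 0 \<and> b > 0 \<and>
       (\<forall>x s. has_sum_fam (semis A) (\<lambda>i. ip M x (\<xi> i) * ip M (\<xi> i) x) I s \<longrightarrow>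
          le_A A (scA A (complex_of_real a) (ip M (adj M K x) (adj M K x))) s \<and>
          le_A A s (scA A (complex_of_real b) (ip M x x))))"

end

theory Submission
  imports Defs
begin

lemma ip_diff1:
  assumes "hilbert_module A M"
  shows "ip M (u - v) w = ip M u w - ip M v w"
proof -
  have "ip M u w = ip M (u - v) w + ip M v w"
    using assms unfolding hilbert_module_def by (metis diff_add_cancel)
  then show ?thesis by (simp add: algebra_simps)
qed

lemma ip_ext2:
  assumes hm: "hilbert_module A M" and h: "\<And>z. ip M z u = ip M z v"
  shows "u = v"
proof -
  have st: "\<And>x y. star A (ip M x y) = ip M y x" using hm unfolding hilbert_module_def by blast
  have "\<And>z. ip M u z = ip M v z" using st h by metis
  then have "ip M (u - v) (u - v) = 0" using ip_diff1[OF hm] by simp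
  then have "u - v = 0" using hm unfolding hilbert_module_def by blast
  then show ?thesis by simp
qed

theorem theorem4p13:
  fixes A :: "'a::ring proalg"
    and M :: "('a, 'x::ab_group_add) hmod"
    and K T :: "'x \<Rightarrow> 'x"
    and I :: "'i set"
    and \<xi> :: "'i \<Rightarrow> 'x"
  assumes "hilbert_module A M"
    and "K \<in> homstar A M"
    and "kframe A M K I \<xi>"
    and "T \<in> homstar A M"
    and "unif_bounded A M T"
    and "T \<circ> adj M T = id"
    and "T \<circ> K = K \<circ> T"
  shows "kframe A M K I (\<lambda>i. T (\<xi> i))"
proof -
  note hm = assms(1)
  have st: "\<And>x y. star A (ip M x y) = ip M y x" using hm unfolding hilbert_module_def by blast
  define Ts where "Ts = adj M T"
  define Ks where "Ks = adj M K"
  have aT: "is_adjoint M T Ts"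
  proof -
    obtain T' where "is_adjoint M T T'" using assms(4) unfolding homstar_def by blast
    then show ?thesis unfolding Ts_def adj_def by (rule someI[where P="is_adjoint M T"])
  qed
  have aK: "is_adjoint M K Ks"
  proof -
    obtain K' where "is_adjoint M K K'" using assms(2) unfolding homstar_def by blast
    then show ?thesis unfolding Ks_def adj_def by (rule someI[where P="is_adjoint M K"])
  qed
  have aT': "\<And>x y. ip M (T x) y = ip M x (Ts y)" using aT unfolding is_adjoint_def by blast
  have aK': "\<And>x y. ip M (K x) y = ip M x (Ks y)" using aK unfolding is_adjoint_def by blast
  have TTs: "\<And>w. T (Ts w) = w" using assms(6) unfolding Ts_def by (metis comp_apply id_apply)
  have TK: "\<And>z. T (K z) = K (T z)" using assms(7) by (metis comp_apply)
  have comm: "Ks (Ts x) = Ts (Ks x)" for x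
  proof (rule ip_ext2[OF hm])
    fix z
    have "ip M z (Ks (Ts x)) = ip M (K z) (Ts x)" using aK' by simp
    also have "\<dots> = ip M (T (K z)) x" using aT' by simp
    also have "\<dots> = ip M (K (T z)) x" using TK by simp
    also have "\<dots> = ip M (T z) (Ks x)" using aK' by simp
    also have "\<dots> = ip M z (Ts (Ks x))" using aT' by simp
    finally show "ip M z (Ks (Ts x)) = ip M z (Ts (Ks x))" .
  qed
  have iso: "\<And>w. ip M (Ts w) (Ts w) = ip M w w" using aT' TTs by metis
  have sw: "(\<lambda>i. ip M x (T (\<xi> i)) * ip M (T (\<xi> i)) x) = (\<lambda>i. ip M (Ts x) (\<xi> i) * ip M (\<xi> i) (Ts x))" for x
  proof -
    have "ip M (T (\<xi> i)) x = ip M (\<xi> i) (Ts x)" for i using aT' by simp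
    moreover have "ip M x (T (\<xi> i)) = ip M (Ts x) (\<xi> i)" for i using aT' st by metis
    ultimately show ?thesis by simp
  qed
  obtain a b :: real where ab: "a > 0" "b > 0" and
    fr: "\<And>x s. has_sum_fam (semis A) (\<lambda>i. ip M x (\<xi> i) * ip M (\<xi> i) x) I s \<Longrightarrow>
          le_A A (scA A (complex_of_real a) (ip M (adj M K x) (adj M K x))) s \<and>
          le_A A s (scA A (complex_of_real b) (ip M x x))"
    using assms(3) unfolding kframe_def by blast
  have ex: "\<forall>x. \<exists>s. has_sum_fam (semis A) (\<lambda>i. ip M x (\<xi> i) * ip M (\<xi> i) x) I s"
    and cI: "countable I" using assms(3) unfolding kframe_def by blast+
  have P1: "\<forall>x. \<exists>s. has_sum_fam (semis A) (\<lambda>i. ip M x (T (\<xi> i)) * ip M (T (\<xi> i)) x) I s"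
    unfolding sw using ex by blast
  have P2: "\<forall>x s. has_sum_fam (semis A) (\<lambda>i. ip M x (T (\<xi> i)) * ip M (T (\<xi> i)) x) I s \<longrightarrow>
          le_A A (scA A (complex_of_real a) (ip M (adj M K x) (adj M K x))) s \<and>
          le_A A s (scA A (complex_of_real b) (ip M x x))"
  proof (intro allI impI)
    fix x s assume h: "has_sum_fam (semis A) (\<lambda>i. ip M x (T (\<xi> i)) * ip M (T (\<xi> i)) x) I s"
    then have h': "has_sum_fam (semis A) (\<lambda>i. ip M (Ts x) (\<xi> i) * ip M (\<xi> i) (Ts x)) I s"
      unfolding sw .
    have e1: "ip M (adj M K (Ts x)) (adj M K (Ts x)) = ip M (adj M K x) (adj M K x)"
      using comm iso unfolding Ks_def by metis
    show "le_A A (scA A (complex_of_real a) (ip M (adj M K x) (adj M K x))) s \<and>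
          le_A A s (scA A (complex_of_real b) (ip M x x))"
      using fr[OF h'] e1 iso by simp
  qed
  show ?thesis unfolding kframe_def using cI P1 P2 ab by blast
qed

end
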